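(* Let $n\ge3$, $1\le i\le n-2$ and $j=i+1$. In the group algebra $\mathbb{Q}(t_0,t_1)[B_n]$, let $I$ be the two-sided ideal generated by the elements \[ s_k^2+(1-t_0-t_1)s_k+(t_0t_1-t_0-t_1)\cdot1+t_0t_1\,\overline{s}_k,\qquad k=1,\dots,n-1. \] Let \[ X=\overline{s}_is_js_i-s_is_j\overline{s}_i-\overline{s}_i\overline{s}_js_i+s_i\overline{s}_j\overline{s}_i-\big(s_is_j-s_i\overline{s}_j-\overline{s}_is_j+\overline{s}_i\overline{s}_j-s_js_i+s_j\overline{s}_i+\overline{s}_js_i-\overline{s}_j\overline{s}_i\big) \] and $Y=s_j\overline{s}_is_j-Z$, where \[ \begin{aligned} Z={}&(t_0t_1+1-t_0-t_1)s_i+(t_0+t_1-t_0t_1-1)\overline{s}_i-(t_0+t_1-1)s_is_j+(t_0+t_1-1)\overline{s}_is_j+t_0t_1\,s_i\overline{s}_j-t_0t_1\,\overline{s}_i\overline{s}_j\\ &+s_js_i-s_j\overline{s}_i-(t_0+t_1-t_0t_1)\overline{s}_js_i+(t_0+t_1-t_0t_1)\overline{s}_j\overline{s}_i-(t_0+t_1)s_is_j\overline{s}_i+(t_0+t_1)s_i\overline{s}_j\overline{s}_i\\ &+s_is_js_i-t_0t_1\,\overline{s}_i\overline{s}_j\overline{s}_i+t_0t_1\,\overline{s}_js_i\overline{s}_j. \end{aligned} \] Then the two-sided ideal generated by $I$ and $X$ equals the two-sided ideal generated by $I$ and $Y$; that is, the relation $X=0$ is equivalent to the relation $Y=0$ modulo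 the relations generating $I$.
   Context: $B_n$ is the Artin braid group with standard generators $s_1,\dots,s_{n-1}$ and $\overline{s}_k=s_k^{-1}$; $\mathbb{Q}(t_0,t_1)[B_n]$ is its group algebra over the field of rational functions in two variables. *)

theory Defs
  imports Main "HOL-Library.Poly_Mapping" "HOL-Computational_Algebra.Polynomial"
    "HOL-Computational_Algebra.Fraction_Field"
begin

text \<open>Q(t0,t1) is realised as Q(t0)(t1) = Frac(Frac(Q[t0])[t1]).\<close>

type_synonym K = "rat poly fract poly fract"

definition t0 :: K where "t0 = Fract [: Fract [:0, 1:] 1 :] 1"
definition t1 :: K where "t1 = Fract [:0, 1:] 1"

section \<open>Free monoid on the letters s_k (True) and sbar_k (False)\<close>

datatype fword = FW "(nat \<times> bool) list"

fun fword_app :: "fword \<Rightarrow> fword \<Rightarrow> fword" where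
  "fword_app (FW u) (FW v) = FW (u @ v)"

instantiation fword :: monoid_add
begin
definition zero_fword :: fword where "zero_fword = FW []"
definition plus_fword :: "fword \<Rightarrow> fword \<Rightarrow> fword" where "plus_fword = fword_app"
instance
proof
  fix a b c :: fword
  show "a + b + c = a + (b + c)"
    by (cases a; cases b; cases c) (simp add: plus_fword_def)
  show "0 + a = a" by (cases a) (simp add: plus_fword_def zero_fword_def)
  show "a + 0 = a" by (cases a) (simp add: plus_fword_def zero_fword_def)
qed
end

text \<open>Free associative K-algebra on the letters (noncommutative polynomials):
  finitely supported K-valued functions on words, with convolution product.\<close>

type_synonym falg = "fword \<Rightarrow>\<^sub>0 K"

definition sc :: "K \<Rightarrow> falg" where "sc c = Poly_Mapping.single 0 c"

definition s :: "nat \<Rightarrow> falg" where "s k = Poly_Mapping.single (FW [(k, True)]) 1"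
definition sb :: "nat \<Rightarrow> falg" where "sb k = Poly_Mapping.single (FW [(k, False)]) 1"

definition free_alg_n :: "nat \<Rightarrow> falg set" where
  "free_alg_n n = {f. \<forall>w \<in> Poly_Mapping.keys f.
      \<forall>x \<in> set (case w of FW l \<Rightarrow> l). 1 \<le> fst x \<and> fst x \<le> n - 1}"

definition ideal_gen :: "'a::ring_1 set \<Rightarrow> 'a set \<Rightarrow> 'a set" where
  "ideal_gen R S = \<Inter>{J. J \<subseteq> R \<and> S \<subseteq> J \<and> 0 \<in> J \<and> (\<forall>a\<in>J. \<forall>b\<in>J. a + b \<in> J)
        \<and> (\<forall>a\<in>J. \<forall>r\<in>R. r * a \<in> J \<and> a * r \<in> J)}"

text \<open>Defining relations of the group algebra Q(t0,t1)[B_n] as a quotient of the free algebra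
  (Artin presentation, plus s_k sbar_k = sbar_k s_k = 1).\<close>

definition braid_rels :: "nat \<Rightarrow> falg set" where
  "braid_rels n =
     {s k * sb k - 1 | k. 1 \<le> k \<and> k \<le> n - 1}
   \<union> {sb k * s k - 1 | k. 1 \<le> k \<and> k \<le> n - 1}
   \<union> {s k * s (k+1) * s k - s (k+1) * s k * s (k+1) | k. 1 \<le> k \<and> k + 1 \<le> n - 1}
   \<union> {s k * s l - s l * s k | k l. 1 \<le> k \<and> k + 2 \<le> l \<and> l \<le> n - 1}"

definition I_gens :: "nat \<Rightarrow> falg set" where
  "I_gens n = {s k * s k + sc (1 - t0 - t1) * s k + sc (t0*t1 - t0 - t1)
                + sc (t0*t1) * sb k | k. 1 \<le> k \<and> k \<le> n - 1}"

definition relX :: "nat \<Rightarrow> nat \<Rightarrow> falg" where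
  "relX i j = sb i * s j * s i - s i * s j * sb i - sb i * sb j * s i + s i * sb j * sb i
     - (s i * s j - s i * sb j - sb i * s j + sb i * sb j - s j * s i + s j * sb i
        + sb j * s i - sb j * sb i)"

definition relZ :: "nat \<Rightarrow> nat \<Rightarrow> falg" where
  "relZ i j =
       sc (t0*t1 + 1 - t0 - t1) * s i + sc (t0 + t1 - t0*t1 - 1) * sb i
     - sc (t0 + t1 - 1) * s i * s j + sc (t0 + t1 - 1) * sb i * s j
     + sc (t0*t1) * s i * sb j - sc (t0*t1) * sb i * sb j
     + s j * s i - s j * sb i - sc (t0 + t1 - t0*t1) * sb j * s i
     + sc (t0 + t1 - t0*t1) * sb j * sb i - sc (t0 + t1) * s i * s j * sb i
     + sc (t0 + t1) * s i * sb j * sb i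
     + s i * s j * s i - sc (t0*t1) * sb i * sb j * sb i + sc (t0*t1) * sb j * s i * sb j"

definition relY :: "nat \<Rightarrow> nat \<Rightarrow> falg" where
  "relY i j = s j * sb i * s j - relZ i j"

end

theory Submission imports Defs begin

lemma sc_lookup_left: "Poly_Mapping.lookup (sc c * f) k = c * Poly_Mapping.lookup f k"
    unfolding sc_def Poly_Mapping.lookup_mult Poly_Mapping.lookup_single
    by (simp add: mult_when when_mult)
lemma sc_lookup_right: "Poly_Mapping.lookup (f * sc c) k = c * Poly_Mapping.lookup f k"
proof -
  have e: "\<And>a. (\<Sum>aa. (c when aa = 0 when k = a + aa)) = (c when k = a)"
  proof -
    fix a
    have "\<And>aa. (c when aa = 0 when k = a + aa) = ((c when k = a) when aa = 0)"
      by (simp add: when_def)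
    then show "(\<Sum>aa. (c when aa = 0 when k = a + aa)) = (c when k = a)" by simp
  qed
  show ?thesis
    unfolding sc_def Poly_Mapping.lookup_mult Poly_Mapping.lookup_single
    by (simp add: e mult_when when_mult mult.commute)
qed
lemma sc_comm: "sc c * f = f * sc c"
  by (rule poly_mapping_eqI) (simp add: sc_lookup_left sc_lookup_right)
lemma sc_add: "sc (x + y) = sc x + sc y" by (simp add: sc_def single_add)
lemma sc_diff: "sc (x - y) = sc x - sc y" by (simp add: sc_def single_diff)
lemma sc_minus: "sc (- x) = - sc x" by (simp add: sc_def single_uminus)
lemma sc_mult: "sc (x * y) = sc x * sc y" by (simp add: sc_def mult_single)
lemma sc_one: "sc 1 = 1" by (simp add: sc_def)

lemma sc_lc: "s k * (sc c * g) = sc c * (s k * g)" "sb k * (sc c * g) = sc c * (sb k * g)"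
  by (metis mult.assoc sc_comm)+
lemma sc_rc: "s k * sc c = sc c * s k" "sb k * sc c = sc c * sb k"
  by (simp_all add: sc_comm)

lemmas scs = sc_add sc_diff sc_minus sc_mult sc_one

lemma core:
  fixes R J :: "falg set" and i j :: nat
  defines "a \<equiv> s i" and "A \<equiv> sb i" and "b \<equiv> s j" and "B \<equiv> sb j"
  assumes Radd: "\<And>x y. x \<in> R \<Longrightarrow> y \<in> R \<Longrightarrow> x + y \<in> R"
    and Rmult: "\<And>x y. x \<in> R \<Longrightarrow> y \<in> R \<Longrightarrow> x * y \<in> R"
    and Rsc: "\<And>c. sc c \<in> R"
    and Jadd: "\<And>x y. x \<in> J \<Longrightarrow> y \<in> J \<Longrightarrow> x + y \<in> J"
    and Jl: "\<And>x r. x \<in> J \<Longrightarrow> r \<in> R \<Longrightarrow> r * x \<in> J"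
    and Jr: "\<And>x r. x \<in> J \<Longrightarrow> r \<in> R \<Longrightarrow> x * r \<in> J"
    and aR: "a \<in> R" and AR: "A \<in> R" and bR: "b \<in> R" and BR: "B \<in> R"
    and P: "a * b * a - b * a * b \<in> J"
    and ia: "a * A - 1 \<in> J" and ai: "A * a - 1 \<in> J"
    and ib: "b * B - 1 \<in> J" and bi: "B * b - 1 \<in> J"
    and Cb: "b * b + sc (1 - t0 - t1) * b + sc (t0*t1 - t0 - t1) + sc (t0*t1) * B \<in> J"
  shows "relY i j + relX i j * s j \<in> J"
proof -
  have oneR: "1 \<in> R" using Rsc[of 1] by (simp add: sc_def)
  have mR: "- 1 \<in> R" using Rsc[of "-1"] by (simp add: sc_def single_uminus)
  have Jneg: "\<And>x. x \<in> J \<Longrightarrow> - x \<in> J" using Jl[OF _ mR] by simp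
  have Jdiff: "\<And>x y. x \<in> J \<Longrightarrow> y \<in> J \<Longrightarrow> x - y \<in> J"
    using Jadd Jneg by (metis diff_conv_add_uminus)
  note RR = aR AR bR BR oneR Rsc Radd Rmult
  note JJ = Jadd Jdiff Jneg Jl Jr P ia ai ib bi
  define D8 where "D8 = B * a * b - a * b * A"
  have D8: "D8 \<in> J"
  proof -
    have "D8 = (B * (a * b * a - b * a * b) + (B * b - 1) * a * b) * A - B * a * b * (a * A - 1)"
      unfolding D8_def by (simp add: algebra_simps)
    also have "\<dots> \<in> J" by (blast intro: JJ RR)
    finally show ?thesis .
  qed
  define D1 where "D1 = A * b * a * b - b * a"
  have D1: "D1 \<in> J"
  proof -
    have "D1 = (A * a - 1) * b * a - A * (a * b * a - b * a * b)"
      unfolding D1_def by (simp add: algebra_simps)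
    also have "\<dots> \<in> J" by (blast intro: JJ RR)
    finally show ?thesis .
  qed
  define D2 where "D2 = a * b * A * b - B * a * b * b"
  have D2: "D2 \<in> J"
  proof -
    have "D2 = - (D8 * b)"
      unfolding D2_def D8_def by (simp add: algebra_simps)
    also have "\<dots> \<in> J" by (blast intro: JJ RR D8)
    finally show ?thesis .
  qed
  define D3 where "D3 = A * B * a * b - b * A"
  have D3: "D3 \<in> J"
  proof -
    have "D3 = (A * a - 1) * b * A + A * D8"
      unfolding D3_def D8_def by (simp add: algebra_simps)
    also have "\<dots> \<in> J" by (blast intro: JJ RR D8)
    finally show ?thesis .
  qed
  define D9 where "D9 = B * A * b - a * B * A"
  have D9: "D9 \<in> J"
  proof -
    have "D9 = ((B * b - 1) * a - B * A * (a * b * a - b * a * b) + B * (A * a - 1) * b * a) * B * A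
             - B * A * b * ((a * A - 1) + a * (b * B - 1) * A)"
      unfolding D9_def by (simp add: algebra_simps)
    also have "\<dots> \<in> J" by (blast intro: JJ RR)
    finally show ?thesis .
  qed
  define D4 where "D4 = a * B * A * b - B * A * b * b"
  have D4: "D4 \<in> J"
  proof -
    have "D4 = - (D9 * b)"
      unfolding D4_def D9_def by (simp add: algebra_simps)
    also have "\<dots> \<in> J" by (blast intro: JJ RR D9)
    finally show ?thesis .
  qed
  define D5 where "D5 = a * B * b - a"
  have D5: "D5 \<in> J"
  proof -
    have "D5 = a * (B * b - 1)"
      unfolding D5_def by (simp add: algebra_simps)
    also have "\<dots> \<in> J" by (blast intro: JJ RR)
    finally show ?thesis .
  qed
  define D6 where "D6 = A * B * b - A"
  have D6: "D6 \<in> J"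
  proof -
    have "D6 = A * (B * b - 1)"
      unfolding D6_def by (simp add: algebra_simps)
    also have "\<dots> \<in> J" by (blast intro: JJ RR)
    finally show ?thesis .
  qed
  define D7 where "D7 = b * a * b - a * b * a"
  have D7: "D7 \<in> J"
  proof -
    have "D7 = - (a * b * a - b * a * b)"
      unfolding D7_def by (simp add: algebra_simps)
    also have "\<dots> \<in> J" by (blast intro: JJ RR)
    finally show ?thesis .
  qed
  define D10 where "D10 = B * A * B - A * B * A"
  have D10: "D10 \<in> J"
  proof -
    have "D10 = B * A * B * (- (a * b * (a * A - 1) * B * A + a * (b * B - 1) * A + (a * A - 1)))
        + (B * A * B * (a * b * a - b * a * b) + B * A * (B * b - 1) * a * b + B * (A * a - 1) * b + (B * b - 1)) * A * B * A"
      unfolding D10_def by (simp add: algebra_simps)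
    also have "\<dots> \<in> J" by (blast intro: JJ RR)
    finally show ?thesis .
  qed
  define C where "C = b * b + sc (1 - t0 - t1) * b + sc (t0*t1 - t0 - t1) + sc (t0*t1) * B"
  have "relY i j + relX i j * s j = D1 - D2 - D3 + D4 + D5 - D6 + D7 - D8
      + (- (B * a * C) + B * A * C - a * C + A * C)
      + sc (1 - t0 - t1) * D8 + sc (t0 + t1) * D9 - sc (t0 * t1) * D10"
    unfolding relY_def relZ_def relX_def D1_def D2_def D3_def D4_def D5_def D6_def D7_def D8_def
      D9_def D10_def C_def a_def A_def b_def B_def
    apply (simp only: scs)
    apply (simp add: algebra_simps sc_lc sc_rc del: sc_comm)
    done
  also have "\<dots> \<in> J"
    using D1 D2 D3 D4 D5 D6 D7 D8 D9 D10 Cb[folded C_def]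
    by (blast intro: JJ RR)
  finally show ?thesis .
qed

definition gw :: "nat \<Rightarrow> fword \<Rightarrow> bool" where
  "gw n w = (\<forall>x \<in> set (case w of FW l \<Rightarrow> l). 1 \<le> fst x \<and> fst x \<le> n - 1)"

lemma fa_iff: "f \<in> free_alg_n n \<longleftrightarrow> (\<forall>w \<in> Poly_Mapping.keys f. gw n w)"
  by (simp add: free_alg_n_def gw_def)

lemma gw_plus: "gw n (u + v) = (gw n u \<and> gw n v)"
  by (cases u; cases v) (auto simp: gw_def plus_fword_def)

lemma gw_zero: "gw n 0"
  by (simp add: gw_def zero_fword_def)

lemma fa_add: "f \<in> free_alg_n n \<Longrightarrow> g \<in> free_alg_n n \<Longrightarrow> f + g \<in> free_alg_n n"
  unfolding fa_iff using keys_add[of f g] by auto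

lemma fa_neg: "f \<in> free_alg_n n \<Longrightarrow> - f \<in> free_alg_n n"
  unfolding fa_iff by (simp only: keys_minus)

lemma fa_diff: "f \<in> free_alg_n n \<Longrightarrow> g \<in> free_alg_n n \<Longrightarrow> f - g \<in> free_alg_n n"
  unfolding fa_iff using keys_diff[of f g] by auto

lemma fa_mult: "f \<in> free_alg_n n \<Longrightarrow> g \<in> free_alg_n n \<Longrightarrow> f * g \<in> free_alg_n n"
  unfolding fa_iff using keys_mult[of f g] by (auto simp: gw_plus)

lemma fa_sc: "sc c \<in> free_alg_n n"
  unfolding fa_iff sc_def by (simp add: gw_zero)

lemma fa_one: "1 \<in> free_alg_n n"
  using fa_sc[of 1] by (simp add: sc_one)

lemma fa_s: "1 \<le> k \<Longrightarrow> k \<le> n - 1 \<Longrightarrow> s k \<in> free_alg_n n"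
  unfolding fa_iff s_def by (simp add: gw_def)

lemma fa_sb: "1 \<le> k \<Longrightarrow> k \<le> n - 1 \<Longrightarrow> sb k \<in> free_alg_n n"
  unfolding fa_iff sb_def by (simp add: gw_def)

lemmas fa_rules = fa_add fa_neg fa_diff fa_mult fa_sc fa_one fa_s fa_sb

definition fam :: "'a::ring_1 set \<Rightarrow> 'a set \<Rightarrow> 'a set set" where
  "fam R S = {J. J \<subseteq> R \<and> S \<subseteq> J \<and> 0 \<in> J \<and> (\<forall>a\<in>J. \<forall>b\<in>J. a + b \<in> J)
        \<and> (\<forall>a\<in>J. \<forall>r\<in>R. r * a \<in> J \<and> a * r \<in> J)}"

lemma ig_fam: "ideal_gen R S = \<Inter>(fam R S)"
  by (simp add: ideal_gen_def fam_def)

lemma ig_least: "J \<in> fam R S \<Longrightarrow> ideal_gen R S \<subseteq> J"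
  unfolding ig_fam by blast

lemma famI:
  assumes "J \<subseteq> R" "S \<subseteq> J" "0 \<in> J" "\<And>a b. a \<in> J \<Longrightarrow> b \<in> J \<Longrightarrow> a + b \<in> J"
    "\<And>a r. a \<in> J \<Longrightarrow> r \<in> R \<Longrightarrow> r * a \<in> J \<and> a * r \<in> J"
  shows "J \<in> fam R S"
  using assms unfolding fam_def by blast

lemma famD:
  assumes "J \<in> fam R S"
  shows "J \<subseteq> R" "S \<subseteq> J" "0 \<in> J" "\<And>a b. a \<in> J \<Longrightarrow> b \<in> J \<Longrightarrow> a + b \<in> J"
    "\<And>a r. a \<in> J \<Longrightarrow> r \<in> R \<Longrightarrow> r * a \<in> J"
    "\<And>a r. a \<in> J \<Longrightarrow> r \<in> R \<Longrightarrow> a * r \<in> J"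
  using assms unfolding fam_def by blast+

lemma ig_member:
  assumes SR: "S \<subseteq> R" and z: "0 \<in> R" and ad: "\<And>x y. x \<in> R \<Longrightarrow> y \<in> R \<Longrightarrow> x + y \<in> R"
    and mu: "\<And>x y. x \<in> R \<Longrightarrow> y \<in> R \<Longrightarrow> x * y \<in> R"
  shows "ideal_gen R S \<in> fam R S"
proof -
  have RF: "R \<in> fam R S" by (rule famI) (use SR z ad mu in auto)
  show ?thesis unfolding ig_fam
  proof (rule famI)
    show "\<Inter>(fam R S) \<subseteq> R" using RF by (rule Inter_lower)
    show "S \<subseteq> \<Inter>(fam R S)" using famD(2) by (rule Inter_greatest)
    show "0 \<in> \<Inter>(fam R S)" using famD(3) by (rule InterI)
    fix a b r
    show "a \<in> \<Inter>(fam R S) \<Longrightarrow> b \<in> \<Inter>(fam R S) \<Longrightarrow> a + b \<in> \<Inter>(fam R S)"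
    proof -
      assume a: "a \<in> \<Inter>(fam R S)" and b: "b \<in> \<Inter>(fam R S)"
      show "a + b \<in> \<Inter>(fam R S)"
      proof (rule InterI)
        fix J assume J: "J \<in> fam R S"
        show "a + b \<in> J" using famD(4)[OF J] InterD[OF a J] InterD[OF b J] .
      qed
    qed
    show "a \<in> \<Inter>(fam R S) \<Longrightarrow> r \<in> R \<Longrightarrow> r * a \<in> \<Inter>(fam R S) \<and> a * r \<in> \<Inter>(fam R S)"
    proof -
      assume a: "a \<in> \<Inter>(fam R S)" and r: "r \<in> R"
      show "r * a \<in> \<Inter>(fam R S) \<and> a * r \<in> \<Inter>(fam R S)"
      proof (intro conjI InterI)
        fix J assume J: "J \<in> fam R S"
        show "r * a \<in> J" using famD(5)[OF J] InterD[OF a J] r .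
      next
        fix J assume J: "J \<in> fam R S"
        show "a * r \<in> J" using famD(6)[OF J] InterD[OF a J] r .
      qed
    qed
  qed
qed

lemma zero_fa: "0 \<in> free_alg_n n"
  using fa_sc[of 0 n] by (simp add: sc_def)

lemma fa_member:
  assumes "S \<subseteq> free_alg_n n"
  shows "ideal_gen (free_alg_n n) S \<in> fam (free_alg_n n) S"
  by (rule ig_member[OF assms zero_fa fa_add fa_mult])

lemma G_sub:
  "braid_rels n \<union> I_gens n \<subseteq> free_alg_n n"
  unfolding braid_rels_def I_gens_def
  by (safe; (intro fa_rules; simp))

lemma relX_in: "1 \<le> i \<Longrightarrow> i \<le> n - 1 \<Longrightarrow> 1 \<le> j \<Longrightarrow> j \<le> n - 1 \<Longrightarrow> relX i j \<in> free_alg_n n"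
  unfolding relX_def by (intro fa_rules; simp)

lemma relY_in: "1 \<le> i \<Longrightarrow> i \<le> n - 1 \<Longrightarrow> 1 \<le> j \<Longrightarrow> j \<le> n - 1 \<Longrightarrow> relY i j \<in> free_alg_n n"
  unfolding relY_def relZ_def by (intro fa_rules; simp)

lemma core_fam:
  fixes n i j :: nat
  assumes "n \<ge> 3" and "1 \<le> i" and "i \<le> n - 2" and "j = i + 1"
    and JF: "J \<in> fam (free_alg_n n) S" and GJ: "braid_rels n \<union> I_gens n \<subseteq> J"
  shows "relY i j + relX i j * s j \<in> J"
proof -
  have ij: "i \<le> n - 1" "1 \<le> j" "j \<le> n - 1" using assms by auto
  have Jp: "\<And>x y. x \<in> J \<Longrightarrow> y \<in> J \<Longrightarrow> x + y \<in> J"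
    "\<And>x r. x \<in> J \<Longrightarrow> r \<in> free_alg_n n \<Longrightarrow> r * x \<in> J"
    "\<And>x r. x \<in> J \<Longrightarrow> r \<in> free_alg_n n \<Longrightarrow> x * r \<in> J"
    using JF unfolding fam_def by blast+
  have P: "s i * s j * s i - s j * s i * s j \<in> J"
    using GJ assms ij unfolding braid_rels_def by blast
  have ia: "s i * sb i - 1 \<in> J" and ai: "sb i * s i - 1 \<in> J"
    and ib: "s j * sb j - 1 \<in> J" and bi: "sb j * s j - 1 \<in> J"
    using GJ assms ij unfolding braid_rels_def by blast+
  have Cb: "s j * s j + sc (1 - t0 - t1) * s j + sc (t0*t1 - t0 - t1) + sc (t0*t1) * sb j \<in> J"
    using GJ ij unfolding I_gens_def by blast
  have Rs: "s i \<in> free_alg_n n" "sb i \<in> free_alg_n n" "s j \<in> free_alg_n n" "sb j \<in> free_alg_n n"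
    using fa_s[OF assms(2) ij(1)] fa_sb[OF assms(2) ij(1)] fa_s[OF ij(2,3)] fa_sb[OF ij(2,3)] by auto
  show ?thesis
    by (rule core[OF fa_add fa_mult fa_sc Jp Rs P ia ai ib bi Cb])
qed

theorem lemma2p1:
  fixes n i j :: nat
  assumes "n \<ge> 3" and "1 \<le> i" and "i \<le> n - 2" and "j = i + 1"
  shows "ideal_gen (free_alg_n n) (braid_rels n \<union> I_gens n \<union> {relX i j})
       = ideal_gen (free_alg_n n) (braid_rels n \<union> I_gens n \<union> {relY i j})"
proof -
  let ?R = "free_alg_n n"
  let ?S1 = "braid_rels n \<union> I_gens n \<union> {relX i j}"
  let ?S2 = "braid_rels n \<union> I_gens n \<union> {relY i j}"
  have ij: "1 \<le> i" "i \<le> n - 1" "1 \<le> j" "j \<le> n - 1" using assms by auto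
  have XR: "relX i j \<in> ?R" by (rule relX_in) (use ij in auto)
  have YR: "relY i j \<in> ?R" by (rule relY_in) (use ij in auto)
  have bR: "s j \<in> ?R" "sb j \<in> ?R" using ij by (auto intro: fa_s fa_sb)
  have S1R: "?S1 \<subseteq> ?R" using G_sub XR by blast
  have S2R: "?S2 \<subseteq> ?R" using G_sub YR by blast
  have F1: "ideal_gen ?R ?S1 \<in> fam ?R ?S1" by (rule fa_member[OF S1R])
  have F2: "ideal_gen ?R ?S2 \<in> fam ?R ?S2" by (rule fa_member[OF S2R])
  have bBJ: "s j * sb j - 1 \<in> braid_rels n" unfolding braid_rels_def using ij by blast
  show ?thesis
  proof
    let ?J = "ideal_gen ?R ?S2"
    have cl: "\<And>x y. x \<in> ?J \<Longrightarrow> y \<in> ?J \<Longrightarrow> x + y \<in> ?J"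
      "\<And>x r. x \<in> ?J \<Longrightarrow> r \<in> ?R \<Longrightarrow> r * x \<in> ?J \<and> x * r \<in> ?J"
      "?S2 \<subseteq> ?J" "?J \<subseteq> ?R" "0 \<in> ?J"
      using F2 unfolding fam_def by blast+
    have E: "relY i j + relX i j * s j \<in> ?J"
      by (rule core_fam[OF assms F2]) (use cl in blast)
    have Y: "relY i j \<in> ?J" and bB: "s j * sb j - 1 \<in> ?J" using cl(3) bBJ by blast+
    have m1: "- 1 \<in> ?R" using fa_neg[OF fa_one] .
    have eq: "relX i j = (relY i j + relX i j * s j) * sb j + (- 1) * (relY i j * sb j)
        + (- 1) * (relX i j * (s j * sb j - 1))"
      by (simp add: algebra_simps)
    have "(relY i j + relX i j * s j) * sb j + (- 1) * (relY i j * sb j)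
        + (- 1) * (relX i j * (s j * sb j - 1)) \<in> ?J"
      using cl(1) cl(2) E Y bB bR XR m1 by meson
    then have "relX i j \<in> ?J" using eq by simp
    then have "?J \<in> fam ?R ?S1" using F2 unfolding fam_def by blast
    then show "ideal_gen ?R ?S1 \<subseteq> ?J" by (rule ig_least)
  next
    let ?J = "ideal_gen ?R ?S1"
    have cl: "\<And>x y. x \<in> ?J \<Longrightarrow> y \<in> ?J \<Longrightarrow> x + y \<in> ?J"
      "\<And>x r. x \<in> ?J \<Longrightarrow> r \<in> ?R \<Longrightarrow> r * x \<in> ?J \<and> x * r \<in> ?J"
      "?S1 \<subseteq> ?J" "?J \<subseteq> ?R" "0 \<in> ?J"
      using F1 unfolding fam_def by blast+
    have E: "relY i j + relX i j * s j \<in> ?J"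
      by (rule core_fam[OF assms F1]) (use cl in blast)
    have X: "relX i j \<in> ?J" using cl(3) by blast
    have m1: "- 1 \<in> ?R" using fa_neg[OF fa_one] .
    have eq: "relY i j = (relY i j + relX i j * s j) + (- 1) * (relX i j * s j)"
      by (simp add: algebra_simps)
    have "(relY i j + relX i j * s j) + (- 1) * (relX i j * s j) \<in> ?J"
      using cl(1) cl(2) E X bR m1 by meson
    then have "relY i j \<in> ?J" using eq by simp
    then have "?J \<in> fam ?R ?S2" using F1 unfolding fam_def by blast
    then show "ideal_gen ?R ?S2 \<subseteq> ?J" by (rule ig_least)
  qed
qed

end
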